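(* Let $M$ and $M'$ be two stable matchings in an instance $I$ of SPA-S, and let $M^\lor$ be the assignment defined from $M,M'$ in the context. If a project $p_j$ is undersubscribed in $M^\lor$, then $p_j$ is undersubscribed in at least one of $M$ and $M'$.
   Context: An instance $I$ of SPA-S consists of a finite set $\mathcal{S}$ of students, a finite set $\mathcal{P}$ of projects and a finite set $\mathcal{L}$ of lecturers. Each student $s_i$ ranks a subset $A_i\subseteq\mathcal{P}$ (its acceptable projects) in strict order. Each project is offered by exactly one lecturer; lecturer $l_k$ offers a nonempty set $P_k\subseteq\mathcal{P}$, the $P_k$ partitioning $\mathcal{P}$. Each lecturer $l_k$ ranks in strict order the students who find at least one project of $P_k$ acceptable. Projects have capacities $c_j\in\mathbb{Z}^+$, lecturers have capacities $d_k\in\mathbb{Z}^+$ with $\max\{c_j:p_j\in P_k\}\le d_k\le\sum\{c_j:p_j\in P_k\}$. A pair $(s_i,p_j)$, $p_j$ offered by $l_k$, is acceptable if $p_j\in A_i$ and $s_i$ is on $l_k$'s list. A matching $M$ is a set of acceptable pairs with each student in at most one pair, $|M(p_j)|\le c_j$, $|M(l_k)|\le d_k$, where for an assignment $M$ (a set of acceptable pairs), $M(s_i)$, $M(p_j)$, $M(l_k)$ denote the project of $s_i$, the students assigned to $p_j$, and the students assigned to projects of $l_k$. Undersubscribed/full means fewer than/exactly capacity many assigned students. An acceptable pair $(s_i,p_j)\notin M$ ($p_j$ offered by $l_k$) blocks $M$ if ($s_i$ is unassigned or prefers $p_j$ to $M(s_i)$) and one of: (P1) $p_j$ and $l_k$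 undersubscribed; (P2) $p_j$ undersubscribed, $l_k$ full, $s_i\in M(l_k)$; (P3) $p_j$ undersubscribed, $l_k$ full, $l_k$ prefers $s_i$ to the worst student of $M(l_k)$; (P4) $p_j$ full and $l_k$ prefers $s_i$ to the worst student of $M(p_j)$. $M$ is stable if it has no blocking pair. Given stable matchings $M,M'$, $M^\lor$ is the assignment in which each student unassigned in both $M$ and $M'$ is unassigned, each student assigned to the same project in both is assigned to that project, and every other student is assigned to the worse (in her preference) of her projects in $M$ and $M'$. *)

theory Defs
  imports Main
begin

record ('s, 'p, 'l) spa =
  students  :: "'s set"
  projects  :: "'p set"
  lecturers :: "'l set"
  accept    :: "'s \<Rightarrow> 'p set"
  spref     :: "'s \<Rightarrow> 'p \<Rightarrow> 'p \<Rightarrow> bool"     \<comment> \<open>spref I s p q: s prefers p to q\<close>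
  offer     :: "'p \<Rightarrow> 'l"
  lpref     :: "'l \<Rightarrow> 's \<Rightarrow> 's \<Rightarrow> bool"     \<comment> \<open>lpref I l s t: l prefers s to t\<close>
  pcap      :: "'p \<Rightarrow> nat"
  lcap      :: "'l \<Rightarrow> nat"

definition strict_total_on :: "'a set \<Rightarrow> ('a \<Rightarrow> 'a \<Rightarrow> bool) \<Rightarrow> bool" where
  "strict_total_on X r \<longleftrightarrow>
     (\<forall>x y. r x y \<longrightarrow> x \<in> X \<and> y \<in> X) \<and>
     (\<forall>x. \<not> r x x) \<and>
     (\<forall>x y z. r x y \<longrightarrow> r y z \<longrightarrow> r x z) \<and>
     (\<forall>x\<in>X. \<forall>y\<in>X. x \<noteq> y \<longrightarrow> r x y \<or> r y x)"

definition lec_projects :: "('s, 'p, 'l, 'z) spa_scheme \<Rightarrow> 'l \<Rightarrow> 'p set" where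
  "lec_projects I l = {p \<in> projects I. offer I p = l}"

definition lec_students :: "('s, 'p, 'l, 'z) spa_scheme \<Rightarrow> 'l \<Rightarrow> 's set" where
  "lec_students I l = {s \<in> students I. \<exists>p \<in> accept I s. p \<in> lec_projects I l}"

definition spa_instance :: "('s, 'p, 'l, 'z) spa_scheme \<Rightarrow> bool" where
  "spa_instance I \<longleftrightarrow>
     finite (students I) \<and> finite (projects I) \<and> finite (lecturers I) \<and>
     (\<forall>s \<in> students I. accept I s \<subseteq> projects I \<and> strict_total_on (accept I s) (spref I s)) \<and>
     (\<forall>p \<in> projects I. offer I p \<in> lecturers I \<and> pcap I p > 0) \<and>
     (\<forall>l \<in> lecturers I. lec_projects I l \<noteq> {} \<and>
        strict_total_on (lec_students I l) (lpref I l) \<and>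
        (\<forall>p \<in> lec_projects I l. pcap I p \<le> lcap I l) \<and>
        lcap I l \<le> (\<Sum>p \<in> lec_projects I l. pcap I p))"

definition acceptable :: "('s, 'p, 'l, 'z) spa_scheme \<Rightarrow> 's \<Rightarrow> 'p \<Rightarrow> bool" where
  "acceptable I s p \<longleftrightarrow> s \<in> students I \<and> p \<in> accept I s \<and> s \<in> lec_students I (offer I p)"

definition assigned_p :: "('s \<times> 'p) set \<Rightarrow> 'p \<Rightarrow> 's set" where
  "assigned_p M p = {s. (s, p) \<in> M}"

definition assigned_l :: "('s, 'p, 'l, 'z) spa_scheme \<Rightarrow> ('s \<times> 'p) set \<Rightarrow> 'l \<Rightarrow> 's set" where
  "assigned_l I M l = {s. \<exists>p. (s, p) \<in> M \<and> offer I p = l}"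

definition is_matching :: "('s, 'p, 'l, 'z) spa_scheme \<Rightarrow> ('s \<times> 'p) set \<Rightarrow> bool" where
  "is_matching I M \<longleftrightarrow>
     (\<forall>(s, p) \<in> M. acceptable I s p) \<and>
     (\<forall>s p q. (s, p) \<in> M \<longrightarrow> (s, q) \<in> M \<longrightarrow> p = q) \<and>
     (\<forall>p \<in> projects I. card (assigned_p M p) \<le> pcap I p) \<and>
     (\<forall>l \<in> lecturers I. card (assigned_l I M l) \<le> lcap I l)"

definition p_under :: "('s, 'p, 'l, 'z) spa_scheme \<Rightarrow> ('s \<times> 'p) set \<Rightarrow> 'p \<Rightarrow> bool" where
  "p_under I M p \<longleftrightarrow> card (assigned_p M p) < pcap I p"

definition p_full :: "('s, 'p, 'l, 'z) spa_scheme \<Rightarrow> ('s \<times> 'p) set \<Rightarrow> 'p \<Rightarrow> bool" where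
  "p_full I M p \<longleftrightarrow> card (assigned_p M p) = pcap I p"

definition l_under :: "('s, 'p, 'l, 'z) spa_scheme \<Rightarrow> ('s \<times> 'p) set \<Rightarrow> 'l \<Rightarrow> bool" where
  "l_under I M l \<longleftrightarrow> card (assigned_l I M l) < lcap I l"

definition l_full :: "('s, 'p, 'l, 'z) spa_scheme \<Rightarrow> ('s \<times> 'p) set \<Rightarrow> 'l \<Rightarrow> bool" where
  "l_full I M l \<longleftrightarrow> card (assigned_l I M l) = lcap I l"

definition prefers_to_worst :: "('s, 'p, 'l, 'z) spa_scheme \<Rightarrow> 'l \<Rightarrow> 's \<Rightarrow> 's set \<Rightarrow> bool" where
  "prefers_to_worst I l s X \<longleftrightarrow>
     (\<exists>w \<in> X. (\<forall>u \<in> X. u \<noteq> w \<longrightarrow> lpref I l u w) \<and> lpref I l s w)"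

definition blocking_pair :: "('s, 'p, 'l, 'z) spa_scheme \<Rightarrow> ('s \<times> 'p) set \<Rightarrow> 's \<Rightarrow> 'p \<Rightarrow> bool" where
  "blocking_pair I M s p \<longleftrightarrow>
     acceptable I s p \<and> (s, p) \<notin> M \<and>
     ((\<forall>q. (s, q) \<notin> M) \<or> (\<exists>q. (s, q) \<in> M \<and> spref I s p q)) \<and>
     (let l = offer I p in
       (p_under I M p \<and> l_under I M l) \<or>
       (p_under I M p \<and> l_full I M l \<and> s \<in> assigned_l I M l) \<or>
       (p_under I M p \<and> l_full I M l \<and> prefers_to_worst I l s (assigned_l I M l)) \<or>
       (p_full I M p \<and> prefers_to_worst I l s (assigned_p M p)))"

definition stable :: "('s, 'p, 'l, 'z) spa_scheme \<Rightarrow> ('s \<times> 'p) set \<Rightarrow> bool" where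
  "stable I M \<longleftrightarrow> is_matching I M \<and> (\<forall>s p. \<not> blocking_pair I M s p)"

text \<open>The assignment M-vee: a student assigned the same project in both keeps it; a student
  assigned different projects gets the worse one; a student unassigned in at least one of
  M, M' (being unassigned is regarded as worse than any project) is unassigned.\<close>
definition join_worse :: "('s, 'p, 'l, 'z) spa_scheme \<Rightarrow> ('s \<times> 'p) set \<Rightarrow> ('s \<times> 'p) set \<Rightarrow> ('s \<times> 'p) set" where
  "join_worse I M M' =
     {(s, p). ((s, p) \<in> M \<and> (s, p) \<in> M') \<or>
              ((s, p) \<in> M \<and> (\<exists>q. (s, q) \<in> M' \<and> spref I s q p)) \<or>
              ((s, p) \<in> M' \<and> (\<exists>q. (s, q) \<in> M \<and> spref I s q p))}"

end

theory Submission
  imports Defs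
begin

lemma worst_exists:
  assumes "strict_total_on X r" "finite Y" "Y \<noteq> {}" "Y \<subseteq> X"
  shows "\<exists>w\<in>Y. \<forall>u\<in>Y. u \<noteq> w \<longrightarrow> r u w"
  using assms(2,3,4)
proof (induction Y rule: finite_ne_induct)
  case (singleton x) then show ?case by auto
next
  case (insert x F)
  then obtain w where w: "w \<in> F" "\<forall>u\<in>F. u \<noteq> w \<longrightarrow> r u w" by auto
  have xw: "x \<noteq> w" using insert w by auto
  have xX: "x \<in> X" and wX: "w \<in> X" using insert w by auto
  have tr: "\<And>a b c. r a b \<Longrightarrow> r b c \<Longrightarrow> r a c" and irr: "\<And>a. \<not> r a a"
    using assms(1) unfolding strict_total_on_def by blast+
  from assms(1) xX wX xw have "r x w \<or> r w x" unfolding strict_total_on_def by blast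
  then show ?case
  proof
    assume "r x w" then show ?thesis using w by auto
  next
    assume "r w x" then show ?thesis using w tr insert by (metis insert_iff)
  qed
qed

lemma below_all:
  assumes inst: "spa_instance I" and st: "stable I M'" and pP: "p \<in> projects I"
    and full: "p_full I M' p"
    and acc: "acceptable I s p" and nin: "(s, p) \<notin> M'"
    and pref: "(\<forall>q. (s, q) \<notin> M') \<or> (\<exists>q. (s, q) \<in> M' \<and> spref I s p q)"
    and u: "(u, p) \<in> M'"
  shows "lpref I (offer I p) u s"
proof -
  let ?l = "offer I p"
  have lL: "?l \<in> lecturers I" using inst pP unfolding spa_instance_def by auto
  have sto: "strict_total_on (lec_students I ?l) (lpref I ?l)"
    using inst lL unfolding spa_instance_def by auto
  have pos: "pcap I p > 0" using inst pP unfolding spa_instance_def by auto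
  have fin: "finite (assigned_p M' p)" and ne: "assigned_p M' p \<noteq> {}"
    using full pos unfolding p_full_def by (auto intro: card_ge_0_finite)
  have sub: "assigned_p M' p \<subseteq> lec_students I ?l"
    using st unfolding stable_def is_matching_def assigned_p_def acceptable_def by auto
  obtain w where w: "w \<in> assigned_p M' p" "\<forall>u\<in>assigned_p M' p. u \<noteq> w \<longrightarrow> lpref I ?l u w"
    using worst_exists[OF sto fin ne sub] by blast
  have "\<not> blocking_pair I M' s p" using st unfolding stable_def by auto
  then have "\<not> prefers_to_worst I ?l s (assigned_p M' p)"
    using acc nin pref full unfolding blocking_pair_def Let_def by auto
  then have nl: "\<not> lpref I ?l s w" using w unfolding prefers_to_worst_def by auto
  have sS: "s \<in> lec_students I ?l" using acc unfolding acceptable_def by auto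
  have wS: "w \<in> lec_students I ?l" using w sub by auto
  have sw: "s \<noteq> w" using w nin unfolding assigned_p_def by auto
  have ws: "lpref I ?l w s" using sto sS wS sw nl unfolding strict_total_on_def by blast
  show ?thesis
  proof (cases "u = w")
    case True then show ?thesis using ws by simp
  next
    case False
    then have "lpref I ?l u w" using w u unfolding assigned_p_def by auto
    then show ?thesis using ws sto unfolding strict_total_on_def by blast
  qed
qed

lemma missing_bad:
  assumes inst: "spa_instance I" and st: "stable I M" and st': "stable I M'"
    and s: "(s, p) \<in> M" and nj: "(s, p) \<notin> join_worse I M M'"
  shows "(s, p) \<notin> M' \<and> ((\<forall>q. (s, q) \<notin> M') \<or> (\<exists>q. (s, q) \<in> M' \<and> spref I s p q))"
proof -
  have nin: "(s, p) \<notin> M'" using s nj unfolding join_worse_def by auto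
  have accp: "acceptable I s p" using st s unfolding stable_def is_matching_def by auto
  show ?thesis
  proof (cases "\<exists>q. (s, q) \<in> M'")
    case False then show ?thesis using nin by auto
  next
    case True
    then obtain q where q: "(s, q) \<in> M'" by auto
    have accq: "acceptable I s q" using st' q unfolding stable_def is_matching_def by auto
    have qp: "q \<noteq> p" using q nin by auto
    have sto: "strict_total_on (accept I s) (spref I s)"
      using inst accp unfolding spa_instance_def acceptable_def by auto
    have "spref I s q p \<or> spref I s p q"
      using sto accp accq qp unfolding strict_total_on_def acceptable_def by blast
    moreover have "\<not> spref I s q p" using nj s q unfolding join_worse_def by auto
    ultimately show ?thesis using q nin by auto
  qed
qed

theorem lemma10:
  fixes I :: "('s, 'p, 'l) spa" and M M' :: "('s \<times> 'p) set" and p :: 'p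
  assumes "spa_instance I"
    and "stable I M" and "stable I M'"
    and "p \<in> projects I"
    and "p_under I (join_worse I M M') p"
  shows "p_under I M p \<or> p_under I M' p"
proof (rule ccontr)
  assume nu: "\<not> (p_under I M p \<or> p_under I M' p)"
  let ?J = "join_worse I M M'"
  have le1: "card (assigned_p M p) \<le> pcap I p" and le2: "card (assigned_p M' p) \<le> pcap I p"
    using assms(2,3,4) unfolding stable_def is_matching_def by auto
  have f1: "p_full I M p" and f2: "p_full I M' p"
    using nu le1 le2 unfolding p_under_def p_full_def by auto
  have pos: "pcap I p > 0" using assms(1,4) unfolding spa_instance_def by auto
  have fin1: "finite (assigned_p M p)" and fin2: "finite (assigned_p M' p)"
    using f1 f2 pos unfolding p_full_def by (auto intro: card_ge_0_finite)
  have Jsub: "assigned_p ?J p \<subseteq> assigned_p M p \<union> assigned_p M' p"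
    unfolding join_worse_def assigned_p_def by auto
  have finJ: "finite (assigned_p ?J p)" using Jsub fin1 fin2 finite_subset by blast
  have "assigned_p M p \<subseteq> assigned_p ?J p \<or> assigned_p M' p \<subseteq> assigned_p ?J p"
  proof (rule ccontr)
    assume "\<not> ?thesis"
    then obtain s t where s: "(s, p) \<in> M" "(s, p) \<notin> ?J" and t: "(t, p) \<in> M'" "(t, p) \<notin> ?J"
      unfolding assigned_p_def by auto
    have jsym: "?J = join_worse I M' M" unfolding join_worse_def by auto
    have ms: "(s, p) \<notin> M' \<and> ((\<forall>q. (s, q) \<notin> M') \<or> (\<exists>q. (s, q) \<in> M' \<and> spref I s p q))"
      using missing_bad[OF assms(1,2,3) s] .
    have mt: "(t, p) \<notin> M \<and> ((\<forall>q. (t, q) \<notin> M) \<or> (\<exists>q. (t, q) \<in> M \<and> spref I t p q))"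
      using missing_bad[OF assms(1,3,2) t(1)] t(2) jsym by simp
    have accs: "acceptable I s p" using assms(2) s unfolding stable_def is_matching_def by auto
    have acct: "acceptable I t p" using assms(3) t unfolding stable_def is_matching_def by auto
    have a: "lpref I (offer I p) t s"
      using below_all[OF assms(1,3,4) f2 accs] ms t(1) by blast
    have b: "lpref I (offer I p) s t"
      using below_all[OF assms(1,2,4) f1 acct] mt s(1) by blast
    have lL: "offer I p \<in> lecturers I" using assms(1,4) unfolding spa_instance_def by auto
    have "strict_total_on (lec_students I (offer I p)) (lpref I (offer I p))"
      using assms(1) lL unfolding spa_instance_def by auto
    then show False using a b unfolding strict_total_on_def by blast
  qed
  then have "card (assigned_p M p) \<le> card (assigned_p ?J p) \<or> card (assigned_p M' p) \<le> card (assigned_p ?J p)"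
    using card_mono[OF finJ] by blast
  then show False using assms(5) f1 f2 unfolding p_under_def p_full_def by auto
qed

end
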